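(* Let $Y$ be a finite set, $\mathcal{S}$ a set of splits of $Y$, $\alpha:\mathcal{S}\to\mathbb{R}_{>0}$, and $\delta=\delta_{(\mathcal{S},\alpha)}$ the associated split system diversity. Then $P_\delta=P^{(2)}_\delta$, and hence $T_\delta=T^{(2)}_\delta$.
   Context: A split of $Y$ is an unordered pair $\{C,D\}$ of non-empty disjoint subsets with $C\cup D=Y$; it splits $A\subseteq Y$ if $A\cap C\ne\emptyset$ and $A\cap D\ne\emptyset$. $\delta_{(\mathcal{S},\alpha)}(A)=\sum_{S\in\mathcal{S},\ S\text{ splits }A}\alpha(S)$. $P_\delta=\{f\in\mathbb{R}^{\mathcal{P}(Y)}: f(\emptyset)=0,\ \sum_{A\in\mathcal{A}}f(A)\ge\delta(\bigcup\mathcal{A})\text{ for all }\mathcal{A}\subseteq\mathcal{P}(Y)\}$ and $T_\delta$ is its set of minimal elements (coordinatewise order); $P^{(2)}_\delta=\{f\in\mathbb{R}^{\mathcal{P}(Y)}:f(\emptyset)=0,\ f(A)+f(B)\ge\delta(A\cup B)\ \forall A,B\in\mathcal{P}(Y)\}$ and $T^{(2)}_\delta$ is its set of minimal elements. *)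

theory Defs
  imports "HOL-Analysis.Analysis" "HOL-Library.FuncSet"
begin

definition is_split :: "'a set \<Rightarrow> 'a set set \<Rightarrow> bool" where
  "is_split Y S \<longleftrightarrow> (\<exists>C D. S = {C, D} \<and> C \<noteq> {} \<and> D \<noteq> {} \<and> C \<inter> D = {} \<and> C \<union> D = Y)"

definition splits_set :: "'a set set \<Rightarrow> 'a set \<Rightarrow> bool" where
  "splits_set S A \<longleftrightarrow> (\<forall>C\<in>S. A \<inter> C \<noteq> {})"

definition split_diversity :: "'a set set set \<Rightarrow> ('a set set \<Rightarrow> real) \<Rightarrow> 'a set \<Rightarrow> real" where
  "split_diversity SS \<alpha> A = (\<Sum>S\<in>{S\<in>SS. splits_set S A}. \<alpha> S)"

text \<open>Functions in R^{P(Y)} are modelled as extensional functions on Pow Y.\<close>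
definition P_delta :: "'a set \<Rightarrow> ('a set \<Rightarrow> real) \<Rightarrow> ('a set \<Rightarrow> real) set" where
  "P_delta Y \<delta> = {f \<in> Pow Y \<rightarrow>\<^sub>E UNIV. f {} = 0 \<and>
      (\<forall>\<A>. \<A> \<subseteq> Pow Y \<longrightarrow> (\<Sum>A\<in>\<A>. f A) \<ge> \<delta> (\<Union>\<A>))}"

definition P2_delta :: "'a set \<Rightarrow> ('a set \<Rightarrow> real) \<Rightarrow> ('a set \<Rightarrow> real) set" where
  "P2_delta Y \<delta> = {f \<in> Pow Y \<rightarrow>\<^sub>E UNIV. f {} = 0 \<and>
      (\<forall>A\<in>Pow Y. \<forall>B\<in>Pow Y. f A + f B \<ge> \<delta> (A \<union> B))}"

definition minimal_elements :: "'a set \<Rightarrow> ('a set \<Rightarrow> real) set \<Rightarrow> ('a set \<Rightarrow> real) set" where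
  "minimal_elements Y P = {f \<in> P. \<not> (\<exists>g\<in>P. (\<forall>A\<in>Pow Y. g A \<le> f A) \<and> (\<exists>A\<in>Pow Y. g A < f A))}"

end

theory Submission
  imports Defs
begin

lemma sd_nonneg: assumes "\<forall>S\<in>SS. \<alpha> S > 0" shows "split_diversity SS \<alpha> A \<ge> 0"
  unfolding split_diversity_def using assms by (intro sum_nonneg) auto

lemma sd_empty: assumes "\<forall>S\<in>SS. is_split Y S" shows "split_diversity SS \<alpha> {} = 0"
proof -
  have "{S\<in>SS. splits_set S {}} = {}" using assms by (force simp: splits_set_def is_split_def)
  then show ?thesis unfolding split_diversity_def by (simp only: sum.empty)
qed

lemma splits_mono: "A \<subseteq> B \<Longrightarrow> splits_set S A \<Longrightarrow> splits_set S B"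
  unfolding splits_set_def by blast

lemma key:
  assumes "is_split Y S" "\<A> \<subseteq> Pow Y - {{}}" "A1\<in>\<A>" "A2\<in>\<A>" "A3\<in>\<A>" "A1\<noteq>A2" "A3\<noteq>A1" "A3\<noteq>A2"
    "splits_set S (\<Union>\<A>)" "\<not> splits_set S (\<Union>(\<A>-{A1}))" "\<not> splits_set S (\<Union>(\<A>-{A2}))"
  shows False
proof -
  obtain C D where S: "S={C,D}" "C\<inter>D={}" "C\<union>D=Y"
    using assms(1) unfolding is_split_def by blast
  have sp: "splits_set S X \<longleftrightarrow> X\<inter>C\<noteq>{} \<and> X\<inter>D\<noteq>{}" for X
    unfolding splits_set_def S(1) by simp
  define U1 where "U1 = \<Union>(\<A>-{A1})"
  define U2 where "U2 = \<Union>(\<A>-{A2})"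
  have A3: "A3 \<subseteq> U1" "A3 \<subseteq> U2" "A3\<noteq>{}" "A3 \<subseteq> Y"
    using assms(2,5,7,8) unfolding U1_def U2_def by auto
  have U: "\<Union>\<A> = U1 \<union> U2" using assms(3,4,6) unfolding U1_def U2_def by auto
  have a: "U1 \<inter> C = {} \<or> U1 \<inter> D = {}" using assms(10) sp unfolding U1_def by simp
  have b: "U2 \<inter> C = {} \<or> U2 \<inter> D = {}" using assms(11) sp unfolding U2_def by simp
  have c: "(U1 \<union> U2) \<inter> C \<noteq> {}" "(U1 \<union> U2) \<inter> D \<noteq> {}" using assms(9) sp U by auto
  have d: "A3 \<inter> C \<noteq> {} \<or> A3 \<inter> D \<noteq> {}" using A3(3,4) S(3) by auto
  from a b c d A3(1,2) show False by auto
qed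

lemma P2_sub:
  assumes fin: "finite Y" and spl: "\<forall>S\<in>SS. is_split Y S" and pos: "\<forall>S\<in>SS. \<alpha> S > 0"
    and f0: "f {} = 0"
    and f2: "\<forall>A\<in>Pow Y. \<forall>B\<in>Pow Y. f A + f B \<ge> split_diversity SS \<alpha> (A\<union>B)"
  shows "\<A> \<subseteq> Pow Y - {{}} \<Longrightarrow> card \<A> = n \<Longrightarrow> (\<Sum>A\<in>\<A>. f A) \<ge> split_diversity SS \<alpha> (\<Union>\<A>)"
proof (induction n arbitrary: \<A> rule: less_induct)
  case (less n)
  define \<delta> where "\<delta> = split_diversity SS \<alpha>"
  have finA: "finite \<A>" using less.prems fin by (meson finite_Diff finite_Pow_iff finite_subset)
  consider "n=0" | "n=1" | "n=2" | "n\<ge>3" by linarith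
  then show ?case
  proof cases
    case 1
    then have "\<A> = {}" using finA less.prems by auto
    then show ?thesis using sd_empty[OF spl] by simp
  next
    case 2
    then obtain A where A: "\<A> = {A}" using less.prems card_1_singletonE by blast
    then have "A \<in> Pow Y" using less.prems by auto
    then have "f A + f {} \<ge> split_diversity SS \<alpha> (A \<union> {})" using f2 by blast
    then show ?thesis using f0 A by simp
  next
    case 3
    then obtain A B where A: "\<A> = {A,B}" "A\<noteq>B" using less.prems card_2_iff by metis
    then have "A \<in> Pow Y" "B \<in> Pow Y" using less.prems by auto
    then have "f A + f B \<ge> split_diversity SS \<alpha> (A \<union> B)" using f2 by blast
    then show ?thesis using A by simp
  next
    case 4
    define U where "U = \<Union>\<A>"
    define Bad where "Bad A = {S\<in>SS. splits_set S U \<and> \<not> splits_set S (\<Union>(\<A>-{A}))}" for A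
    have "SS \<subseteq> Pow (Pow Y)" using spl by (auto simp: is_split_def)
    then have finSS: "finite SS" using fin by (meson finite_Pow_iff finite_subset)
    have IH: "(\<Sum>B\<in>\<A>-{A}. f B) \<ge> \<delta> (\<Union>(\<A>-{A}))" if "A\<in>\<A>" for A
      using less.IH[of "n-1" "\<A>-{A}"] less.prems that finA 4 unfolding \<delta>_def by auto
    have dec: "\<delta> U = \<delta> (\<Union>(\<A>-{A})) + sum \<alpha> (Bad A)" if "A\<in>\<A>" for A
    proof -
      have "{S\<in>SS. splits_set S U} = {S\<in>SS. splits_set S (\<Union>(\<A>-{A}))} \<union> Bad A"
        using splits_mono[of "\<Union>(\<A>-{A})" U] unfolding Bad_def U_def by blast
      moreover have "{S\<in>SS. splits_set S (\<Union>(\<A>-{A}))} \<inter> Bad A = {}" unfolding Bad_def by blast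
      moreover have "finite (Bad A)" using finSS unfolding Bad_def by auto
      ultimately show ?thesis unfolding \<delta>_def split_diversity_def
        by (simp add: sum.union_disjoint finSS)
    qed
    have disj: "Bad A1 \<inter> Bad A2 = {}" if "A1\<in>\<A>" "A2\<in>\<A>" "A1\<noteq>A2" for A1 A2
    proof -
      have "card (\<A>-{A1,A2}) = n - 2" using that less.prems finA
        by (simp add: card_Diff_subset)
      then have "card (\<A>-{A1,A2}) \<noteq> 0" using 4 by simp
      then have "\<A>-{A1,A2} \<noteq> {}" by (metis card.empty)
      then obtain A3 where "A3 \<in> \<A>" "A3\<noteq>A1" "A3\<noteq>A2" by blast
      then have A3: "A3 \<in> \<A>" "A3\<noteq>A1" "A3\<noteq>A2" by blast+
      show ?thesis
      proof (rule ccontr)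
        assume "Bad A1 \<inter> Bad A2 \<noteq> {}"
        then obtain S where S: "S \<in> Bad A1" "S \<in> Bad A2" by blast
        then have "S \<in> SS" "splits_set S (\<Union>\<A>)" "\<not> splits_set S (\<Union>(\<A>-{A1}))"
          "\<not> splits_set S (\<Union>(\<A>-{A2}))" unfolding Bad_def U_def by auto
        then show False using key[OF _ less.prems(1) that(1,2) A3(1) that(3) A3(2,3)] spl by blast
      qed
    qed
    have "(\<Sum>A\<in>\<A>. sum \<alpha> (Bad A)) = sum \<alpha> (\<Union>A\<in>\<A>. Bad A)"
      by (rule sum.UNION_disjoint[symmetric]) (use finA finSS disj in \<open>auto simp: Bad_def\<close>)
    also have "\<dots> \<le> \<delta> U" unfolding \<delta>_def split_diversity_def
      by (rule sum_mono2) (use finSS pos in \<open>auto simp: Bad_def\<close>)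
    finally have s1: "(\<Sum>A\<in>\<A>. sum \<alpha> (Bad A)) \<le> \<delta> U" .
    have "(\<Sum>A\<in>\<A>. \<delta> (\<Union>(\<A>-{A}))) = (\<Sum>A\<in>\<A>. \<delta> U - sum \<alpha> (Bad A))"
      using dec by (intro sum.cong) auto
    also have "\<dots> = real n * \<delta> U - (\<Sum>A\<in>\<A>. sum \<alpha> (Bad A))"
      using less.prems by (simp add: sum_subtractf)
    finally have s2: "(\<Sum>A\<in>\<A>. \<delta> (\<Union>(\<A>-{A}))) \<ge> (real n - 1) * \<delta> U"
      using s1 by (simp add: algebra_simps)
    have "(\<Sum>A\<in>\<A>. \<delta> (\<Union>(\<A>-{A}))) \<le> (\<Sum>A\<in>\<A>. (\<Sum>B\<in>\<A>-{A}. f B))"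
      using IH by (intro sum_mono) auto
    also have "\<dots> = (\<Sum>A\<in>\<A>. sum f \<A> - f A)"
      using finA by (intro sum.cong) (auto simp: sum_diff1)
    also have "\<dots> = (real n - 1) * sum f \<A>"
      using less.prems by (simp add: sum_subtractf algebra_simps)
    finally have "(real n - 1) * \<delta> U \<le> (real n - 1) * sum f \<A>" using s2 by linarith
    moreover have "real n - 1 > 0" using 4 by auto
    ultimately show ?thesis unfolding U_def \<delta>_def by simp
  qed
qed

theorem mainTheorem17:
  fixes Y :: "'a set" and SS :: "'a set set set" and \<alpha> :: "'a set set \<Rightarrow> real"
  assumes "finite Y"
    and "\<forall>S\<in>SS. is_split Y S"
    and "\<forall>S\<in>SS. \<alpha> S > 0"
  shows "P_delta Y (split_diversity SS \<alpha>) = P2_delta Y (split_diversity SS \<alpha>)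
    \<and> minimal_elements Y (P_delta Y (split_diversity SS \<alpha>))
      = minimal_elements Y (P2_delta Y (split_diversity SS \<alpha>))"
proof -
  let ?d = "split_diversity SS \<alpha>"
  have "P_delta Y ?d = P2_delta Y ?d"
  proof
    show "P_delta Y ?d \<subseteq> P2_delta Y ?d"
    proof
      fix f assume "f \<in> P_delta Y ?d"
      then have f: "f \<in> Pow Y \<rightarrow>\<^sub>E UNIV" "f {} = 0"
        "\<And>\<A>. \<A> \<subseteq> Pow Y \<Longrightarrow> (\<Sum>A\<in>\<A>. f A) \<ge> ?d (\<Union>\<A>)"
        unfolding P_delta_def by auto
      have "f A + f B \<ge> ?d (A \<union> B)" if "A \<in> Pow Y" "B \<in> Pow Y" for A B
      proof (cases "A = B")
        case True
        have "f A \<ge> ?d A" using f(3)[of "{A}"] that by auto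
        moreover have "?d A \<ge> 0" using sd_nonneg assms(3) by blast
        ultimately show ?thesis using True by simp
      next
        case False
        then show ?thesis using f(3)[of "{A,B}"] that by auto
      qed
      then show "f \<in> P2_delta Y ?d" using f unfolding P2_delta_def by auto
    qed
  next
    show "P2_delta Y ?d \<subseteq> P_delta Y ?d"
    proof
      fix f assume "f \<in> P2_delta Y ?d"
      then have f: "f \<in> Pow Y \<rightarrow>\<^sub>E UNIV" "f {} = 0"
        "\<forall>A\<in>Pow Y. \<forall>B\<in>Pow Y. f A + f B \<ge> ?d (A\<union>B)"
        unfolding P2_delta_def by auto
      have "(\<Sum>A\<in>\<A>. f A) \<ge> ?d (\<Union>\<A>)" if "\<A> \<subseteq> Pow Y" for \<A>
      proof -
        have finA: "finite \<A>" using that assms(1) by (meson finite_Pow_iff finite_subset)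
        have "(\<Sum>A\<in>\<A>. f A) = (\<Sum>A\<in>\<A>-{{}}. f A)"
          using finA f(2) by (simp add: sum_diff1)
        moreover have "\<Union>\<A> = \<Union>(\<A>-{{}})" by auto
        moreover have "(\<Sum>A\<in>\<A>-{{}}. f A) \<ge> ?d (\<Union>(\<A>-{{}}))"
          using P2_sub[OF assms f(2) f(3), of "\<A>-{{}}"] that by auto
        ultimately show ?thesis by simp
      qed
      then show "f \<in> P_delta Y ?d" using f unfolding P_delta_def by auto
    qed
  qed
  then show ?thesis by simp
qed

end
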